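(* Let $\boldsymbol{A}\in\mathsf{PSL}$ be finite and $\Phi$ a Sahlqvist quasiequation in the language $\{\land,\lnot,0,1\}$ of $\mathsf{PSL}$. If $\boldsymbol{A}$ validates $\Phi$, then $\boldsymbol{A}^+$ validates $\Phi$.
   Context: $\mathsf{PSL}$: algebras $\langle A;\land,\lnot,0,1\rangle$, $\langle A;\land\rangle$ a semilattice (order $a\le b$ iff $a\land b=a$) with minimum $0$, maximum $1$, and $c\land a=0\iff c\le\lnot a$. Join irreducible element: not the minimum, and whenever $a=b\lor c$ with the join existing, $a=b$ or $a=c$; $\mathsf{J}(\boldsymbol{A})$ is the poset of join irreducibles. For finite $\boldsymbol{A}$, $\boldsymbol{A}^+=\langle\mathsf{Dw}(\mathsf{J}(\boldsymbol{A}));\cap,\lnot,\emptyset,\mathsf{J}(\boldsymbol{A})\rangle$ with $\mathsf{Dw}$ the downsets and $\lnot D=\{a\in\mathsf{J}(\boldsymbol{A}):D\cap{\downarrow}a=\emptyset\}$. Sahlqvist quasiequations: formulas over variables with $\land,\lor,\to,\lnot,0,1$; an occurrence of a variable is positive (negative) if the number of negations and antecedents of implications in whose scope it lies is even (odd); a formula is positive (negative) if all its variable occurrences are. A Sahlqvist antecedent is built from variables, negative formulas, $0,1$ using only $\land,\lor$. A Sahlqvist implication is a positive formula, or $\lnot\varphi$ with $\varphi$ a Sahlqvist antecedent, or $\varphi\to\psi$ with $\varphi$ a Sahlqvist antecedent and $\psi$ positive. A Sahlqvist quasiequation is $\varphi_1\land y\le z\,\&\cdots\&\,\varphi_n\land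 y\le z\Longrightarrow y\le z$ (universally quantified), $y,z$ distinct variables not in the $\varphi_i$, each $\varphi_i$ built from Sahlqvist implications using only $\land,\lor$, and $a\le b$ meaning $a\land b\approx a$. It is in the language of $\mathsf{PSL}$ if only $\land,\lnot,0,1$ occur. *)

theory Defs
  imports Main
begin

datatype fm = Var nat | Meet fm fm | Join fm fm | Imp fm fm | Neg fm | Bot | Top

fun vars :: "fm \<Rightarrow> nat set" where
  "vars (Var x) = {x}"
| "vars (Meet a b) = vars a \<union> vars b"
| "vars (Join a b) = vars a \<union> vars b"
| "vars (Imp a b) = vars a \<union> vars b"
| "vars (Neg a) = vars a"
| "vars Bot = {}"
| "vars Top = {}"

fun in_psl_lang :: "fm \<Rightarrow> bool" where
  "in_psl_lang (Var x) = True"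
| "in_psl_lang (Meet a b) = (in_psl_lang a \<and> in_psl_lang b)"
| "in_psl_lang (Join a b) = False"
| "in_psl_lang (Imp a b) = False"
| "in_psl_lang (Neg a) = in_psl_lang a"
| "in_psl_lang Bot = True"
| "in_psl_lang Top = True"

fun is_pos :: "fm \<Rightarrow> bool" and is_neg :: "fm \<Rightarrow> bool" where
  "is_pos (Var x) = True"
| "is_pos (Meet a b) = (is_pos a \<and> is_pos b)"
| "is_pos (Join a b) = (is_pos a \<and> is_pos b)"
| "is_pos (Imp a b) = (is_neg a \<and> is_pos b)"
| "is_pos (Neg a) = is_neg a"
| "is_pos Bot = True"
| "is_pos Top = True"
| "is_neg (Var x) = False"
| "is_neg (Meet a b) = (is_neg a \<and> is_neg b)"
| "is_neg (Join a b) = (is_neg a \<and> is_neg b)"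
| "is_neg (Imp a b) = (is_pos a \<and> is_neg b)"
| "is_neg (Neg a) = is_pos a"
| "is_neg Bot = True"
| "is_neg Top = True"

inductive sahl_ant :: "fm \<Rightarrow> bool" where
  "sahl_ant (Var x)"
| "is_neg f \<Longrightarrow> sahl_ant f"
| "sahl_ant Bot"
| "sahl_ant Top"
| "sahl_ant a \<Longrightarrow> sahl_ant b \<Longrightarrow> sahl_ant (Meet a b)"
| "sahl_ant a \<Longrightarrow> sahl_ant b \<Longrightarrow> sahl_ant (Join a b)"

inductive sahl_imp :: "fm \<Rightarrow> bool" where
  "is_pos f \<Longrightarrow> sahl_imp f"
| "sahl_ant f \<Longrightarrow> sahl_imp (Neg f)"
| "sahl_ant f \<Longrightarrow> is_pos g \<Longrightarrow> sahl_imp (Imp f g)"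

inductive sahl_comb :: "fm \<Rightarrow> bool" where
  "sahl_imp f \<Longrightarrow> sahl_comb f"
| "sahl_comb a \<Longrightarrow> sahl_comb b \<Longrightarrow> sahl_comb (Meet a b)"
| "sahl_comb a \<Longrightarrow> sahl_comb b \<Longrightarrow> sahl_comb (Join a b)"

text \<open>The quasiequation  phi_1 /\ y <= z & ... & phi_n /\ y <= z ==> y <= z
  is represented by the list phis = [phi_1,...,phi_n] and the variables y, z.\<close>
definition sahlqvist_qe :: "fm list \<Rightarrow> nat \<Rightarrow> nat \<Rightarrow> bool" where
  "sahlqvist_qe phis y z \<longleftrightarrow> y \<noteq> z \<and>
     (\<forall>f\<in>set phis. sahl_comb f \<and> y \<notin> vars f \<and> z \<notin> vars f)"

definition qe_in_psl_lang :: "fm list \<Rightarrow> bool" where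
  "qe_in_psl_lang phis \<longleftrightarrow> (\<forall>f\<in>set phis. in_psl_lang f)"

record 'a psl_alg =
  car :: "'a set"
  mt :: "'a \<Rightarrow> 'a \<Rightarrow> 'a"
  ng :: "'a \<Rightarrow> 'a"
  zr :: "'a"
  on :: "'a"

definition le :: "('a, 'b) psl_alg_scheme \<Rightarrow> 'a \<Rightarrow> 'a \<Rightarrow> bool" where
  "le A a b \<longleftrightarrow> mt A a b = a"

definition psl :: "('a, 'b) psl_alg_scheme \<Rightarrow> bool" where
  "psl A \<longleftrightarrow>
     (\<forall>a\<in>car A. \<forall>b\<in>car A. mt A a b \<in> car A) \<and>
     (\<forall>a\<in>car A. ng A a \<in> car A) \<and> zr A \<in> car A \<and> on A \<in> car A \<and>
     (\<forall>a\<in>car A. mt A a a = a) \<and>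
     (\<forall>a\<in>car A. \<forall>b\<in>car A. mt A a b = mt A b a) \<and>
     (\<forall>a\<in>car A. \<forall>b\<in>car A. \<forall>c\<in>car A. mt A (mt A a b) c = mt A a (mt A b c)) \<and>
     (\<forall>a\<in>car A. le A (zr A) a \<and> le A a (on A)) \<and>
     (\<forall>a\<in>car A. \<forall>c\<in>car A. mt A c a = zr A \<longleftrightarrow> le A c (ng A a))"

definition is_join :: "('a, 'b) psl_alg_scheme \<Rightarrow> 'a \<Rightarrow> 'a \<Rightarrow> 'a \<Rightarrow> bool" where
  "is_join A b c a \<longleftrightarrow> a \<in> car A \<and> le A b a \<and> le A c a \<and>
     (\<forall>u\<in>car A. le A b u \<and> le A c u \<longrightarrow> le A a u)"

definition join_irr :: "('a, 'b) psl_alg_scheme \<Rightarrow> 'a \<Rightarrow> bool" where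
  "join_irr A a \<longleftrightarrow> a \<in> car A \<and> a \<noteq> zr A \<and>
     (\<forall>b\<in>car A. \<forall>c\<in>car A. is_join A b c a \<longrightarrow> a = b \<or> a = c)"

definition JI :: "('a, 'b) psl_alg_scheme \<Rightarrow> 'a set" where
  "JI A = {a. join_irr A a}"

definition downsets :: "('a, 'b) psl_alg_scheme \<Rightarrow> 'a set set" where
  "downsets A = {D. D \<subseteq> JI A \<and> (\<forall>a\<in>D. \<forall>b\<in>JI A. le A b a \<longrightarrow> b \<in> D)}"

definition plus :: "('a, 'b) psl_alg_scheme \<Rightarrow> 'a set psl_alg" where
  "plus A = \<lparr> car = downsets A, mt = (\<inter>),
     ng = (\<lambda>D. {a\<in>JI A. D \<inter> {b\<in>JI A. le A b a} = {}}),
     zr = {}, on = JI A \<rparr>"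

text \<open>Evaluation of formulas of the PSL language (join/implication are not
  interpreted; they never occur in the formulas considered).\<close>
fun eval :: "('a, 'b) psl_alg_scheme \<Rightarrow> (nat \<Rightarrow> 'a) \<Rightarrow> fm \<Rightarrow> 'a" where
  "eval A v (Var x) = v x"
| "eval A v (Meet a b) = mt A (eval A v a) (eval A v b)"
| "eval A v (Neg a) = ng A (eval A v a)"
| "eval A v Bot = zr A"
| "eval A v Top = on A"
| "eval A v (Join a b) = undefined"
| "eval A v (Imp a b) = undefined"

definition validates :: "('a, 'b) psl_alg_scheme \<Rightarrow> fm list \<Rightarrow> nat \<Rightarrow> nat \<Rightarrow> bool" where
  "validates A phis y z \<longleftrightarrow>
     (\<forall>v. (\<forall>x. v x \<in> car A) \<longrightarrow>
        (\<forall>f\<in>set phis. le A (mt A (eval A v f) (v y)) (v z)) \<longrightarrow> le A (v y) (v z))"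

end

theory Submission
  imports Defs
begin

lemma psl_basic:
  assumes "psl A"
  shows psl_mt_car: "a \<in> car A \<Longrightarrow> b \<in> car A \<Longrightarrow> mt A a b \<in> car A"
    and psl_ng_car: "a \<in> car A \<Longrightarrow> ng A a \<in> car A"
    and psl_zr_car: "zr A \<in> car A"
    and psl_on_car: "on A \<in> car A"
    and psl_idem: "a \<in> car A \<Longrightarrow> mt A a a = a"
    and psl_comm: "a \<in> car A \<Longrightarrow> b \<in> car A \<Longrightarrow> mt A a b = mt A b a"
    and psl_assoc: "a \<in> car A \<Longrightarrow> b \<in> car A \<Longrightarrow> c \<in> car A \<Longrightarrow> mt A (mt A a b) c = mt A a (mt A b c)"
    and psl_zr_le: "a \<in> car A \<Longrightarrow> le A (zr A) a"
    and psl_le_on: "a \<in> car A \<Longrightarrow> le A a (on A)"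
    and psl_ng: "a \<in> car A \<Longrightarrow> c \<in> car A \<Longrightarrow> mt A c a = zr A \<longleftrightarrow> le A c (ng A a)"
  using assms unfolding psl_def by blast+

definition dense :: "('a,'b) psl_alg_scheme \<Rightarrow> 'a set \<Rightarrow> 'a \<Rightarrow> bool" where
  "dense A D m \<longleftrightarrow> (\<forall>m'\<in>JI A. le A m' m \<longrightarrow> (\<exists>m''\<in>JI A. le A m'' m' \<and> m'' \<in> D))"

definition ngP :: "('a,'b) psl_alg_scheme \<Rightarrow> 'a set \<Rightarrow> 'a set" where
  "ngP A D = {a\<in>JI A. D \<inter> {b\<in>JI A. le A b a} = {}}"

lemma plus_simps:
  "car (plus A) = downsets A" "mt (plus A) = (\<inter>)" "ng (plus A) = ngP A"
  "zr (plus A) = {}" "on (plus A) = JI A"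
  unfolding plus_def ngP_def by auto

lemma JI_car: "x \<in> JI A \<Longrightarrow> x \<in> car A"
  unfolding JI_def join_irr_def by auto

context
  fixes A :: "('a,'b) psl_alg_scheme"
  assumes P: "psl A" and F: "finite (car A)"
begin

lemma ple_refl: "a \<in> car A \<Longrightarrow> le A a a"
  using psl_idem[OF P] by (simp add: le_def)

lemma ple_antisym: "a \<in> car A \<Longrightarrow> b \<in> car A \<Longrightarrow> le A a b \<Longrightarrow> le A b a \<Longrightarrow> a = b"
  using psl_comm[OF P] by (metis le_def)

lemma ple_trans: "a \<in> car A \<Longrightarrow> b \<in> car A \<Longrightarrow> c \<in> car A \<Longrightarrow> le A a b \<Longrightarrow> le A b c \<Longrightarrow> le A a c"
  using psl_assoc[OF P] by (metis le_def)

lemma le_mt1: "a \<in> car A \<Longrightarrow> b \<in> car A \<Longrightarrow> le A (mt A a b) a"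
  unfolding le_def using psl_assoc[OF P] psl_comm[OF P] psl_idem[OF P]
  by (metis)

lemma le_mt2: "a \<in> car A \<Longrightarrow> b \<in> car A \<Longrightarrow> le A (mt A a b) b"
  unfolding le_def using psl_assoc[OF P] psl_comm[OF P] psl_idem[OF P]
  by (metis)

lemma le_mtI: "a \<in> car A \<Longrightarrow> b \<in> car A \<Longrightarrow> c \<in> car A \<Longrightarrow> le A c a \<Longrightarrow> le A c b \<Longrightarrow> le A c (mt A a b)"
  unfolding le_def using psl_assoc[OF P] by metis

lemma le_mt_iff: "a \<in> car A \<Longrightarrow> b \<in> car A \<Longrightarrow> c \<in> car A \<Longrightarrow> le A c (mt A a b) \<longleftrightarrow> le A c a \<and> le A c b"
  by (meson le_mt1 le_mt2 le_mtI ple_trans psl_mt_car[OF P])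

lemma le_zr: "a \<in> car A \<Longrightarrow> le A a (zr A) \<Longrightarrow> a = zr A"
  by (simp add: ple_antisym psl_zr_car[OF P] psl_zr_le[OF P])

lemma glb_ex: "finite S \<Longrightarrow> S \<subseteq> car A \<Longrightarrow>
  \<exists>m\<in>car A. (\<forall>s\<in>S. le A m s) \<and> (\<forall>u\<in>car A. (\<forall>s\<in>S. le A u s) \<longrightarrow> le A u m)"
proof (induction S rule: finite_induct)
  case empty
  then show ?case using psl_on_car[OF P] psl_le_on[OF P] by blast
next
  case (insert a S)
  then obtain m where m: "m \<in> car A" "\<forall>s\<in>S. le A m s" "\<forall>u\<in>car A. (\<forall>s\<in>S. le A u s) \<longrightarrow> le A u m" by auto
  have a: "a \<in> car A" using insert by auto
  show ?case
  proof (intro bexI[of _ "mt A a m"] conjI ballI impI)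
    show "mt A a m \<in> car A" using psl_mt_car[OF P a m(1)] .
    fix s assume "s \<in> insert a S"
    then consider "s = a" | "s \<in> S" by auto
    then show "le A (mt A a m) s"
    proof cases
      case 1 then show ?thesis using le_mt1 a m(1) by simp
    next
      case 2
      then have "s \<in> car A" "le A m s" using insert.prems m by auto
      then show ?thesis using le_mt2[OF a m(1)] ple_trans[of "mt A a m" m s] psl_mt_car[OF P a m(1)] m(1) by blast
    qed
  next
    fix u assume "u \<in> car A" "\<forall>s\<in>insert a S. le A u s"
    then show "le A u (mt A a m)" using m a le_mtI by auto
  qed
qed

lemma lub_ex: "S \<subseteq> car A \<Longrightarrow>
  \<exists>m\<in>car A. (\<forall>s\<in>S. le A s m) \<and> (\<forall>u\<in>car A. (\<forall>s\<in>S. le A s u) \<longrightarrow> le A m u)"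
proof -
  assume S: "S \<subseteq> car A"
  define U where "U = {u\<in>car A. \<forall>s\<in>S. le A s u}"
  have "finite U" "U \<subseteq> car A" using F unfolding U_def by auto
  from glb_ex[OF this] obtain m where m: "m\<in>car A" "\<forall>s\<in>U. le A m s" "\<forall>u\<in>car A. (\<forall>s\<in>U. le A u s) \<longrightarrow> le A u m" by blast
  show ?thesis
    using m S unfolding U_def by (intro bexI[of _ m]) auto
qed

lemma join_ex: "a \<in> car A \<Longrightarrow> b \<in> car A \<Longrightarrow> \<exists>c. is_join A a b c"
  using lub_ex[of "{a,b}"] unfolding is_join_def by auto

lemma JI_below: "x \<in> car A \<Longrightarrow> x \<noteq> zr A \<Longrightarrow> \<exists>m\<in>JI A. le A m x"
proof (induction "card {u\<in>car A. le A u x}" arbitrary: x rule: less_induct)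
  case less
  show ?case
  proof (cases "join_irr A x")
    case True
    then show ?thesis using less ple_refl unfolding JI_def by auto
  next
    case False
    then obtain b c where bc: "b \<in> car A" "c \<in> car A" "is_join A b c x" "x \<noteq> b" "x \<noteq> c"
      using less.prems unfolding join_irr_def by auto
    have "b \<noteq> zr A \<or> c \<noteq> zr A"
    proof (rule ccontr)
      assume "\<not> ?thesis"
      then have "le A x (zr A)" using bc(3) psl_zr_car[OF P] ple_refl[of "zr A"] psl_zr_car[OF P]
        unfolding is_join_def by auto
      then show False using le_zr less.prems by auto
    qed
    moreover have "le A b x" "le A c x" using bc(3) unfolding is_join_def by auto
    ultimately obtain d where d: "d \<in> car A" "d \<noteq> zr A" "le A d x" "d \<noteq> x"
      using bc(1,2,4,5) by metis
    have sub: "{u\<in>car A. le A u d} \<subset> {u\<in>car A. le A u x}"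
    proof
      show "{u\<in>car A. le A u d} \<subseteq> {u\<in>car A. le A u x}" using d less.prems(1) ple_trans[of _ d x] by blast
      have "x \<notin> {u\<in>car A. le A u d}" using d ple_antisym[of x d] less.prems(1) by blast
      moreover have "x \<in> {u\<in>car A. le A u x}" using less.prems(1) ple_refl by blast
      ultimately show "{u\<in>car A. le A u d} \<noteq> {u\<in>car A. le A u x}" by blast
    qed
    have "card {u\<in>car A. le A u d} < card {u\<in>car A. le A u x}"
      by (rule psubset_card_mono[OF _ sub]) (use F in auto)
    from less.hyps[OF this d(1,2)] obtain m where m: "m\<in>JI A" "le A m d" by auto
    then have "m \<in> car A" unfolding JI_def join_irr_def by blast
    then have "le A m x" using ple_trans[of m d x] m d less.prems(1) by blast
    then show ?thesis using m by blast
  qed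
qed

lemma below_JI: "finite S \<Longrightarrow> j \<in> JI A \<Longrightarrow> S \<subseteq> car A \<Longrightarrow> \<forall>s\<in>S. le A s j \<and> s \<noteq> j \<Longrightarrow>
  \<exists>w\<in>car A. le A w j \<and> w \<noteq> j \<and> (\<forall>s\<in>S. le A s w)"
proof (induction S rule: finite_induct)
  case empty
  then show ?case using psl_zr_car[OF P] psl_zr_le[OF P] unfolding JI_def join_irr_def by auto
next
  case (insert a S)
  then obtain w where w: "w\<in>car A" "le A w j" "w \<noteq> j" "\<forall>s\<in>S. le A s w" by auto
  have a: "a \<in> car A" "le A a j" "a \<noteq> j" using insert by auto
  obtain c where c: "is_join A a w c" using join_ex[OF a(1) w(1)] by auto
  have j: "j \<in> car A" "join_irr A j" using insert.prems unfolding JI_def join_irr_def by auto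
  have cj: "le A c j" using c a w j unfolding is_join_def by auto
  have cc: "c \<in> car A" "le A a c" "le A w c" using c unfolding is_join_def by auto
  have "c \<noteq> j" using c j(2) a(1,3) w(1,3) unfolding join_irr_def by blast
  moreover have "\<forall>s\<in>insert a S. le A s c"
  proof
    fix s assume "s \<in> insert a S"
    then consider "s = a" | "s \<in> S" by auto
    then show "le A s c"
    proof cases
      case 2 then have "s \<in> car A" using insert.prems by auto
      then show ?thesis using ple_trans[of s w c] 2 w cc by blast
    qed (use cc in simp)
  qed
  ultimately show ?case using cc cj by blast
qed

lemma eval_car: "in_psl_lang t \<Longrightarrow> (\<forall>x. v x \<in> car A) \<Longrightarrow> eval A v t \<in> car A"
  by (induction t) (auto simp: psl_mt_car[OF P] psl_ng_car[OF P] psl_zr_car[OF P] psl_on_car[OF P])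

lemma ngP_down: "ngP A D \<in> downsets A"
proof -
  have "le A c a" if "a \<in> JI A" "b \<in> JI A" "le A b a" "c \<in> JI A" "le A c b" for a b c
    using ple_trans[OF JI_car[OF that(4)] JI_car[OF that(2)] JI_car[OF that(1)]] that by blast
  then show ?thesis unfolding ngP_def downsets_def by blast
qed

lemma eval_down: "in_psl_lang t \<Longrightarrow> (\<forall>x. V x \<in> downsets A) \<Longrightarrow> eval (plus A) V t \<in> downsets A"
proof (induction t)
  case (Meet t1 t2)
  then show ?case by (auto simp: plus_simps downsets_def)
next
  case (Neg t)
  then show ?case using ngP_down by (simp add: plus_simps)
next
  case Top
  show ?case by (simp add: plus_simps downsets_def)
next
  case Bot
  show ?case by (simp add: plus_simps downsets_def)
qed (auto simp: plus_simps)

definition em :: "'a \<Rightarrow> 'a set" where "em a = {k\<in>JI A. le A k a}"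

lemma em_mt: "a \<in> car A \<Longrightarrow> b \<in> car A \<Longrightarrow> em (mt A a b) = em a \<inter> em b"
proof -
  assume a: "a \<in> car A" and b: "b \<in> car A"
  have "\<And>k. k \<in> JI A \<Longrightarrow> le A k (mt A a b) \<longleftrightarrow> le A k a \<and> le A k b"
    using le_mt_iff[OF a b JI_car] by simp
  then show ?thesis unfolding em_def by blast
qed

lemma em_zr: "em (zr A) = {}"
proof -
  have "\<And>k. k \<in> JI A \<Longrightarrow> \<not> le A k (zr A)"
  proof
    fix k assume k: "k \<in> JI A" "le A k (zr A)"
    then have "k = zr A" using le_zr[OF JI_car[OF k(1)]] by simp
    moreover have "k \<noteq> zr A" using k(1) unfolding JI_def join_irr_def by simp
    ultimately show False by simp
  qed
  then show ?thesis unfolding em_def by blast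
qed

lemma em_on: "em (on A) = JI A"
proof -
  have "\<And>k. k \<in> JI A \<Longrightarrow> le A k (on A)"
    using psl_le_on[OF P, OF JI_car] by simp
  then show ?thesis unfolding em_def by blast
qed

lemma em_ng: "a \<in> car A \<Longrightarrow> em (ng A a) = ngP A (em a)"
proof -
  assume a: "a \<in> car A"
  have "le A k (ng A a) \<longleftrightarrow> \<not> (\<exists>b\<in>JI A. le A b k \<and> le A b a)" if k: "k \<in> JI A" for k
  proof -
    have kc: "k \<in> car A" using JI_car k .
    have "le A k (ng A a) \<longleftrightarrow> mt A k a = zr A" using psl_ng[OF P a kc] by simp
    also have "\<dots> \<longleftrightarrow> \<not> (\<exists>b\<in>JI A. le A b k \<and> le A b a)"
    proof
      assume z: "mt A k a = zr A"
      show "\<not> (\<exists>b\<in>JI A. le A b k \<and> le A b a)"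
      proof
        assume "\<exists>b\<in>JI A. le A b k \<and> le A b a"
        then obtain b where b: "b \<in> JI A" "le A b k" "le A b a" by blast
        have "le A b (mt A k a)" using le_mtI[OF kc a JI_car[OF b(1)]] b by blast
        then have "b = zr A" using z le_zr JI_car[OF b(1)] by simp
        then show False using b(1) unfolding JI_def join_irr_def by simp
      qed
    next
      assume n: "\<not> (\<exists>b\<in>JI A. le A b k \<and> le A b a)"
      show "mt A k a = zr A"
      proof (rule ccontr)
        assume "mt A k a \<noteq> zr A"
        from JI_below[OF psl_mt_car[OF P kc a] this] obtain b where b: "b\<in>JI A" "le A b (mt A k a)" by blast
        then have "le A b k \<and> le A b a" using le_mt_iff[OF kc a JI_car[OF b(1)]] by simp
        then show False using n b by blast
      qed
    qed
    finally show ?thesis .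
  qed
  then show ?thesis unfolding em_def ngP_def by blast
qed

lemma hom: "in_psl_lang t \<Longrightarrow> (\<forall>x. v x \<in> car A) \<Longrightarrow> eval (plus A) (\<lambda>x. em (v x)) t = em (eval A v t)"
proof (induction t)
  case (Meet t1 t2)
  then show ?case by (simp add: plus_simps em_mt eval_car)
next
  case (Neg t)
  then have ih: "eval (plus A) (\<lambda>x. em (v x)) t = em (eval A v t)" and c: "eval A v t \<in> car A"
    using eval_car by auto
  have "eval (plus A) (\<lambda>x. em (v x)) (Neg t) = ngP A (eval (plus A) (\<lambda>x. em (v x)) t)"
    by (simp add: plus_simps)
  also have "\<dots> = em (ng A (eval A v t))" using ih em_ng[OF c] by simp
  finally show ?case by simp
next
  case Bot
  show ?case using em_zr by (simp add: plus_simps)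
next
  case Top
  show ?case using em_on by (simp add: plus_simps)
qed simp_all

lemma em_down: "a \<in> car A \<Longrightarrow> em a \<in> downsets A"
proof -
  assume a: "a \<in> car A"
  have "le A b a" if "c \<in> JI A" "le A c a" "b \<in> JI A" "le A b c" for b c
    using ple_trans[OF JI_car[OF that(3)] JI_car[OF that(1)] a] that by blast
  then show ?thesis unfolding em_def downsets_def by blast
qed

lemma dense_local: "m \<in> JI A \<Longrightarrow> \<forall>k\<in>JI A. le A k m \<longrightarrow> (k \<in> D \<longleftrightarrow> k \<in> D') \<Longrightarrow> dense A D m \<longleftrightarrow> dense A D' m"
proof -
  assume m: "m \<in> JI A" and h: "\<forall>k\<in>JI A. le A k m \<longrightarrow> (k \<in> D \<longleftrightarrow> k \<in> D')"
  have *: "le A m'' m" if "m'' \<in> JI A" "m' \<in> JI A" "le A m'' m'" "le A m' m" for m' m''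
    using ple_trans[OF JI_car[OF that(1)] JI_car[OF that(2)] JI_car[OF m]] that by blast
  show ?thesis unfolding dense_def
  proof
    assume "\<forall>m'\<in>JI A. le A m' m \<longrightarrow> (\<exists>m''\<in>JI A. le A m'' m' \<and> m'' \<in> D)"
    then show "\<forall>m'\<in>JI A. le A m' m \<longrightarrow> (\<exists>m''\<in>JI A. le A m'' m' \<and> m'' \<in> D')"
      using h * by blast
  next
    assume "\<forall>m'\<in>JI A. le A m' m \<longrightarrow> (\<exists>m''\<in>JI A. le A m'' m' \<and> m'' \<in> D')"
    then show "\<forall>m'\<in>JI A. le A m' m \<longrightarrow> (\<exists>m''\<in>JI A. le A m'' m' \<and> m'' \<in> D)"
      using h * by blast
  qed
qed

lemma dense_int: "D \<in> downsets A \<Longrightarrow> E \<in> downsets A \<Longrightarrow> m \<in> JI A \<Longrightarrow>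
   dense A (D \<inter> E) m \<longleftrightarrow> dense A D m \<and> dense A E m"
proof -
  assume D: "D \<in> downsets A" and E: "E \<in> downsets A" and m: "m \<in> JI A"
  have *: "le A m'' m" if "m'' \<in> JI A" "m' \<in> JI A" "le A m'' m'" "le A m' m" for m' m''
    using ple_trans[OF JI_car[OF that(1)] JI_car[OF that(2)] JI_car[OF m]] that by blast
  have Dd: "\<And>a b. a \<in> D \<Longrightarrow> b \<in> JI A \<Longrightarrow> le A b a \<Longrightarrow> b \<in> D" using D unfolding downsets_def by blast
  show ?thesis
  proof
    assume "dense A (D \<inter> E) m"
    then show "dense A D m \<and> dense A E m" unfolding dense_def by blast
  next
    assume h: "dense A D m \<and> dense A E m"
    show "dense A (D \<inter> E) m" unfolding dense_def
    proof (intro ballI impI)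
      fix m' assume m': "m' \<in> JI A" "le A m' m"
      then obtain m1 where m1: "m1 \<in> JI A" "le A m1 m'" "m1 \<in> D" using h unfolding dense_def by blast
      then have "le A m1 m" using * m' by blast
      then obtain m2 where m2: "m2 \<in> JI A" "le A m2 m1" "m2 \<in> E" using h m1 unfolding dense_def by blast
      then have "m2 \<in> D" using Dd m1 by blast
      moreover have "le A m2 m'" using ple_trans[OF JI_car[OF m2(1)] JI_car[OF m1(1)] JI_car[OF m'(1)]] m1 m2 by blast
      ultimately show "\<exists>m''\<in>JI A. le A m'' m' \<and> m'' \<in> D \<inter> E" using m2 by blast
    qed
  qed
qed

lemma ngP_dense: "D \<in> downsets A \<Longrightarrow> k \<in> JI A \<Longrightarrow> k \<in> ngP A D \<longleftrightarrow> \<not> (\<exists>m\<in>JI A. le A m k \<and> dense A D m)"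
proof -
  assume D: "D \<in> downsets A" and k: "k \<in> JI A"
  have Dd: "\<And>a b. a \<in> D \<Longrightarrow> b \<in> JI A \<Longrightarrow> le A b a \<Longrightarrow> b \<in> D" using D unfolding downsets_def by blast
  show ?thesis
  proof
    assume "k \<in> ngP A D"
    then have n: "\<forall>b\<in>JI A. le A b k \<longrightarrow> b \<notin> D" unfolding ngP_def by blast
    show "\<not> (\<exists>m\<in>JI A. le A m k \<and> dense A D m)"
    proof
      assume "\<exists>m\<in>JI A. le A m k \<and> dense A D m"
      then obtain m where m: "m \<in> JI A" "le A m k" "dense A D m" by blast
      have "le A m m" using ple_refl[OF JI_car[OF m(1)]] .
      then obtain m'' where m'': "m'' \<in> JI A" "le A m'' m" "m'' \<in> D" using m(1,3) unfolding dense_def by blast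
      then have "le A m'' k" using m ple_trans[OF JI_car[OF m''(1)] JI_car[OF m(1)] JI_car[OF k]] by blast
      then show False using n m'' by blast
    qed
  next
    assume n: "\<not> (\<exists>m\<in>JI A. le A m k \<and> dense A D m)"
    show "k \<in> ngP A D" unfolding ngP_def
    proof (rule ccontr)
      assume "k \<notin> {a \<in> JI A. D \<inter> {b \<in> JI A. le A b a} = {}}"
      then obtain b where b: "b \<in> JI A" "le A b k" "b \<in> D" using k by blast
      have "dense A D b" unfolding dense_def
      proof (intro ballI impI)
        fix m' assume "m' \<in> JI A" "le A m' b"
        then show "\<exists>m''\<in>JI A. le A m'' m' \<and> m'' \<in> D" using Dd[OF b(3)] ple_refl[OF JI_car[of m']] by blast
      qed
      then show False using n b by blast
    qed
  qed
qed

lemma JI_sub: "JI A \<subseteq> car A" unfolding JI_def join_irr_def by blast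

lemma dtrans: "a \<in> JI A \<Longrightarrow> b \<in> JI A \<Longrightarrow> c \<in> JI A \<Longrightarrow> le A a b \<Longrightarrow> le A b c \<Longrightarrow> le A a c"
  using ple_trans[OF JI_car JI_car JI_car] by blast

lemma inv:
  assumes "in_psl_lang t" "\<forall>x. V x \<in> downsets A" "\<forall>x. V' x \<in> downsets A" "j \<in> JI A"
    "\<forall>x. j \<in> V x \<longleftrightarrow> j \<in> V' x"
    "\<forall>x. \<forall>m\<in>JI A. le A m j \<longrightarrow> (dense A (V x) m \<longleftrightarrow> dense A (V' x) m)"
  shows "(j \<in> eval (plus A) V t \<longleftrightarrow> j \<in> eval (plus A) V' t) \<and>
    (\<forall>m\<in>JI A. le A m j \<longrightarrow> (dense A (eval (plus A) V t) m \<longleftrightarrow> dense A (eval (plus A) V' t) m))"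
  using assms(1)
proof (induction t)
  case (Var x)
  then show ?case using assms(5,6) by simp
next
  case (Meet t1 t2)
  have d: "eval (plus A) V t1 \<in> downsets A" "eval (plus A) V t2 \<in> downsets A"
    "eval (plus A) V' t1 \<in> downsets A" "eval (plus A) V' t2 \<in> downsets A"
    using eval_down Meet.prems assms(2,3) by auto
  show ?case using Meet dense_int[OF d(1,2)] dense_int[OF d(3,4)] by (simp add: plus_simps)
next
  case (Neg t)
  define D where "D = eval (plus A) V t"
  define D' where "D' = eval (plus A) V' t"
  have d: "D \<in> downsets A" "D' \<in> downsets A" unfolding D_def D'_def
    using eval_down Neg.prems assms(2,3) by auto
  have hd: "\<forall>m\<in>JI A. le A m j \<longrightarrow> (dense A D m \<longleftrightarrow> dense A D' m)"
    using Neg unfolding D_def D'_def by simp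
  have key: "k \<in> ngP A D \<longleftrightarrow> k \<in> ngP A D'" if k: "k \<in> JI A" "le A k j" for k
  proof -
    have "(\<exists>m\<in>JI A. le A m k \<and> dense A D m) \<longleftrightarrow> (\<exists>m\<in>JI A. le A m k \<and> dense A D' m)"
      using hd dtrans[OF _ k(1) assms(4) _ k(2)] by blast
    then show ?thesis using ngP_dense[OF d(1) k(1)] ngP_dense[OF d(2) k(1)] by simp
  qed
  have 1: "j \<in> ngP A D \<longleftrightarrow> j \<in> ngP A D'"
    using key[OF assms(4) ple_refl[OF JI_car[OF assms(4)]]] .
  have 2: "dense A (ngP A D) m \<longleftrightarrow> dense A (ngP A D') m" if m: "m \<in> JI A" "le A m j" for m
    using dense_local[OF m(1)] key dtrans[OF _ m(1) assms(4) _ m(2)] by blast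
  show ?case using 1 2 unfolding D_def D'_def by (simp add: plus_simps)
qed (simp_all add: plus_simps)

lemma eval_cong: "\<forall>x\<in>vars t. v x = v' x \<Longrightarrow> eval B v t = eval B v' t"
  by (induction t) auto

lemma main:
  assumes "sahlqvist_qe phis y z" and "qe_in_psl_lang phis"
    and "validates A phis y z"
  shows "validates (plus A) phis y z"
  unfolding validates_def
proof (intro allI impI)
  fix V assume V: "\<forall>x. V x \<in> car (plus A)"
    and H: "\<forall>f\<in>set phis. le (plus A) (mt (plus A) (eval (plus A) V f) (V y)) (V z)"
  have Vd: "\<forall>x. V x \<in> downsets A" using V by (simp add: plus_simps)
  have Vdd: "\<And>x a b. a \<in> V x \<Longrightarrow> b \<in> JI A \<Longrightarrow> le A b a \<Longrightarrow> b \<in> V x"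
    using Vd unfolding downsets_def by blast
  have VJ: "\<And>x. V x \<subseteq> JI A" using Vd unfolding downsets_def by blast
  have yz: "y \<noteq> z" "\<forall>f\<in>set phis. y \<notin> vars f \<and> z \<notin> vars f"
    using assms(1) unfolding sahlqvist_qe_def by auto
  have lang: "\<forall>f\<in>set phis. in_psl_lang f" using assms(2) unfolding qe_in_psl_lang_def by auto
  have H': "\<forall>f\<in>set phis. eval (plus A) V f \<inter> V y \<subseteq> V z"
  proof
    fix f assume "f \<in> set phis"
    then have "(eval (plus A) V f \<inter> V y) \<inter> V z = eval (plus A) V f \<inter> V y"
      using H unfolding le_def plus_simps by blast
    then show "eval (plus A) V f \<inter> V y \<subseteq> V z" by blast
  qed
  show "le (plus A) (V y) (V z)"
  proof (rule ccontr)
    assume "\<not> le (plus A) (V y) (V z)"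
    then have "V y \<inter> V z \<noteq> V y" unfolding le_def plus_simps .
    then obtain j where j: "j \<in> V y" "j \<notin> V z" by blast
    have jJ: "j \<in> JI A" using j VJ by blast
    have jc: "j \<in> car A" using JI_car[OF jJ] .
    have nf: "\<forall>f\<in>set phis. j \<notin> eval (plus A) V f" using H' j by blast
    define Sx where "Sx x = V x \<inter> {k. le A k j}" for x
    have Sxc: "Sx x \<subseteq> car A" for x unfolding Sx_def using VJ[of x] JI_sub by blast
    define lb where "lb x = (SOME w. w \<in> car A \<and> (\<forall>s\<in>Sx x. le A s w) \<and> (\<forall>u\<in>car A. (\<forall>s\<in>Sx x. le A s u) \<longrightarrow> le A w u))" for x
    have lbp: "lb x \<in> car A \<and> (\<forall>s\<in>Sx x. le A s (lb x)) \<and> (\<forall>u\<in>car A. (\<forall>s\<in>Sx x. le A s u) \<longrightarrow> le A (lb x) u)" for x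
      unfolding lb_def by (rule someI_ex) (use lub_ex[OF Sxc] in blast)
    have lbj: "le A (lb x) j \<and> lb x \<noteq> j" if nx: "j \<notin> V x" for x
    proof -
      have fin: "finite (Sx x)" using finite_subset[OF Sxc F] .
      have "\<forall>s\<in>Sx x. le A s j \<and> s \<noteq> j" using nx unfolding Sx_def by auto
      from below_JI[OF fin jJ Sxc this] obtain w where w: "w\<in>car A" "le A w j" "w \<noteq> j" "\<forall>s\<in>Sx x. le A s w" by blast
      have "le A (lb x) w" using lbp[of x] w(1,4) by blast
      then have 1: "le A (lb x) j" using ple_trans[OF conjunct1[OF lbp[of x]] w(1) jc] w(2) by blast
      have "lb x \<noteq> j" using ple_antisym[OF w(1) jc w(2)] \<open>le A (lb x) w\<close> w(3) by blast
      then show ?thesis using 1 by blast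
    qed
    define v0 where "v0 x = (if j \<in> V x then j else lb x)" for x
    have v0c: "\<forall>x. v0 x \<in> car A" unfolding v0_def using jc lbp by simp
    have H1: "\<forall>x. j \<in> V x \<longleftrightarrow> j \<in> em (v0 x)"
    proof
      fix x show "j \<in> V x \<longleftrightarrow> j \<in> em (v0 x)"
      proof (cases "j \<in> V x")
        case True
        then show ?thesis unfolding v0_def em_def using jJ ple_refl[OF jc] by simp
      next
        case False
        have "\<not> le A j (lb x)" using ple_antisym[OF jc conjunct1[OF lbp[of x]]] lbj[OF False] by blast
        then show ?thesis unfolding v0_def em_def using False by simp
      qed
    qed
    have H2: "\<forall>x. \<forall>m\<in>JI A. le A m j \<longrightarrow> (dense A (V x) m \<longleftrightarrow> dense A (em (v0 x)) m)"
    proof (intro allI ballI impI)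
      fix x m assume m: "m \<in> JI A" "le A m j"
      show "dense A (V x) m \<longleftrightarrow> dense A (em (v0 x)) m"
      proof (cases "j \<in> V x")
        case True
        have "dense A (V x) m" unfolding dense_def
        proof (intro ballI impI)
          fix m' assume m': "m' \<in> JI A" "le A m' m"
          then have "m' \<in> V x" using Vdd[OF True] dtrans[OF m'(1) m(1) jJ] m by blast
          then show "\<exists>m''\<in>JI A. le A m'' m' \<and> m'' \<in> V x" using m' ple_refl[OF JI_car[OF m'(1)]] by blast
        qed
        moreover have "dense A (em (v0 x)) m" unfolding dense_def
        proof (intro ballI impI)
          fix m' assume m': "m' \<in> JI A" "le A m' m"
          then have "le A m' j" using dtrans[OF m'(1) m(1) jJ] m by blast
          then have "m' \<in> em (v0 x)" using True m' unfolding v0_def em_def by simp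
          then show "\<exists>m''\<in>JI A. le A m'' (m') \<and> m'' \<in> em (v0 x)" using m' ple_refl[OF JI_car[OF m'(1)]] by blast
        qed
        ultimately show ?thesis by simp
      next
        case False
        have v0x: "v0 x = lb x" unfolding v0_def using False by simp
        show ?thesis
        proof
          assume dV: "dense A (V x) m"
          show "dense A (em (v0 x)) m" unfolding dense_def
          proof (intro ballI impI)
            fix m' assume m': "m' \<in> JI A" "le A m' m"
            then obtain m'' where m'': "m''\<in>JI A" "le A m'' m'" "m'' \<in> V x" using dV unfolding dense_def by blast
            have "le A m'' m" using dtrans[OF m''(1) m'(1) m(1)] m' m'' by blast
            then have "le A m'' j" using dtrans[OF m''(1) m(1) jJ] m by blast
            then have "m'' \<in> Sx x" unfolding Sx_def using m'' by blast
            then have "le A m'' (lb x)" using lbp[of x] by blast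
            then have "m'' \<in> em (v0 x)" unfolding em_def v0x using m''(1) by blast
            then show "\<exists>m''\<in>JI A. le A m'' m' \<and> m'' \<in> em (v0 x)" using m'' by blast
          qed
        next
          assume dE: "dense A (em (v0 x)) m"
          show "dense A (V x) m" unfolding dense_def
          proof (intro ballI impI)
            fix m' assume m': "m' \<in> JI A" "le A m' m"
            have m'c: "m' \<in> car A" using JI_car[OF m'(1)] .
            show "\<exists>m''\<in>JI A. le A m'' m' \<and> m'' \<in> V x"
            proof (rule ccontr)
              assume nn: "\<not> (\<exists>m''\<in>JI A. le A m'' m' \<and> m'' \<in> V x)"
              have ub: "le A s (ng A m')" if s: "s \<in> Sx x" for s
              proof -
                have sV: "s \<in> V x" and sc: "s \<in> car A" using s Sxc unfolding Sx_def by auto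
                have "mt A s m' = zr A"
                proof (rule ccontr)
                  assume "mt A s m' \<noteq> zr A"
                  from JI_below[OF psl_mt_car[OF P sc m'c] this] obtain b where b: "b\<in>JI A" "le A b (mt A s m')" by blast
                  then have "le A b s" "le A b m'" using le_mt_iff[OF sc m'c JI_car[OF b(1)]] by auto
                  then have "b \<in> V x" using Vdd[OF sV b(1)] by blast
                  then show False using nn b \<open>le A b m'\<close> by blast
                qed
                then show ?thesis using psl_ng[OF P m'c sc] by simp
              qed
              have ngc: "ng A m' \<in> car A" using psl_ng_car[OF P m'c] .
              have lbn: "le A (lb x) (ng A m')" using lbp ub ngc by blast
              obtain m'' where m'': "m''\<in>JI A" "le A m'' m'" "m'' \<in> em (v0 x)" using dE m' unfolding dense_def by blast
              have m''c: "m'' \<in> car A" using JI_car[OF m''(1)] .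
              have "le A m'' (lb x)" using m''(3) v0x unfolding em_def by simp
              then have "le A m'' (ng A m')" using ple_trans[OF m''c _ ngc] lbp lbn by blast
              then have "mt A m'' m' = zr A" using psl_ng[OF P m'c m''c] by simp
              moreover have "mt A m'' m' = m''" using m''(2) unfolding le_def .
              ultimately have "m'' = zr A" by simp
              then show False using m''(1) unfolding JI_def join_irr_def by simp
            qed
          qed
        qed
      qed
    qed
    have emd: "\<forall>x. em (v0 x) \<in> downsets A" using em_down v0c by blast
    have nle: "\<not> le A j (eval A v0 f)" if f: "f \<in> set phis" for f
    proof -
      have "j \<in> eval (plus A) V f \<longleftrightarrow> j \<in> eval (plus A) (\<lambda>x. em (v0 x)) f"
        using inv[OF _ Vd emd jJ H1 H2] lang f by blast
      also have "\<dots> \<longleftrightarrow> j \<in> em (eval A v0 f)" using hom lang f v0c by simp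
      finally show ?thesis using nf f jJ unfolding em_def by simp
    qed
    define S where "S = (\<lambda>f. mt A (eval A v0 f) j) ` set phis"
    have Sc: "S \<subseteq> car A" unfolding S_def using psl_mt_car[OF P eval_car jc] lang v0c by blast
    have Sj: "\<forall>s\<in>S. le A s j \<and> s \<noteq> j"
    proof
      fix s assume "s \<in> S"
      then obtain f where f: "f \<in> set phis" "s = mt A (eval A v0 f) j" unfolding S_def by blast
      have ec: "eval A v0 f \<in> car A" using eval_car lang f v0c by blast
      have "le A s j" using le_mt2[OF ec jc] f by simp
      moreover have "s \<noteq> j"
      proof
        assume "s = j"
        then have "le A j (eval A v0 f)" using le_mt1[OF ec jc] f by simp
        then show False using nle f by blast
      qed
      ultimately show "le A s j \<and> s \<noteq> j" by blast
    qed
    from below_JI[OF _ jJ Sc Sj] obtain w where w: "w\<in>car A" "le A w j" "w \<noteq> j" "\<forall>s\<in>S. le A s w"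
      unfolding S_def by blast
    define v where "v = v0(y := j, z := w)"
    have vc: "\<forall>x. v x \<in> car A" unfolding v_def using v0c jc w by simp
    have vy: "v y = j" and vz: "v z = w" unfolding v_def using yz by auto
    have ev: "eval A v f = eval A v0 f" if "f \<in> set phis" for f
      by (rule eval_cong) (use yz that in \<open>auto simp: v_def\<close>)
    have "\<forall>f\<in>set phis. le A (mt A (eval A v f) (v y)) (v z)"
      using w(4) ev vy vz unfolding S_def by auto
    then have "le A (v y) (v z)" using assms(3) vc unfolding validates_def by blast
    then have "le A j w" using vy vz by simp
    then show False using ple_antisym[OF jc w(1) _ w(2)] w(3) by simp
  qed
qed

end

theorem proposition5p11:
  fixes A :: "'a psl_alg" and phis :: "fm list" and y z :: nat
  assumes "psl A" and "finite (car A)"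
    and "sahlqvist_qe phis y z" and "qe_in_psl_lang phis"
    and "validates A phis y z"
  shows "validates (plus A) phis y z"
  using main[OF assms] .

end
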